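(* Let $\mathcal{H}$ be a hypergraph on a finite vertex set $V$ and let $p\in[0,1]$. For every $\gamma\in(0,1/10]$, writing $\mu=\mu_p(\mathcal{H})$ and $\Delta=\Delta_p(\mathcal{H})$, \[ \Pr\big(\nu(\mathcal{H}[V_p])\le\gamma^2\mu\big)\le\exp\big(-(1-\gamma)\mu+2\Delta\big). \]
   Context: $V_p$ denotes the random subset of $V$ containing each element independently with probability $p$. For $W\subseteq V$, $\mathcal{H}[W]=\{A\in\mathcal{H}: A\subseteq W\}$. $\nu(\cdot)$ is the matching number. $\mu_p(\mathcal{H})=\sum_{A\in\mathcal{H}}p^{|A|}$ and $\Delta_p(\mathcal{H})=\sum p^{|A\cup B|}$, the sum over unordered pairs $\{A,B\}$ of distinct edges of $\mathcal{H}$ with $A\cap B\neq\emptyset$. *)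

theory Defs
  imports Complex_Main
begin

definition hypergraph_on :: "'a set \<Rightarrow> 'a set set \<Rightarrow> bool" where
  "hypergraph_on V H \<longleftrightarrow> finite V \<and> (\<forall>A\<in>H. A \<subseteq> V \<and> A \<noteq> {})"

definition induced :: "'a set set \<Rightarrow> 'a set \<Rightarrow> 'a set set" where
  "induced H W = {A \<in> H. A \<subseteq> W}"

definition is_matching :: "'a set set \<Rightarrow> 'a set set \<Rightarrow> bool" where
  "is_matching H M \<longleftrightarrow> M \<subseteq> H \<and> (\<forall>A\<in>M. \<forall>B\<in>M. A \<noteq> B \<longrightarrow> A \<inter> B = {})"

definition matching_number :: "'a set set \<Rightarrow> nat" where
  "matching_number H = Max {card M | M. is_matching H M}"

definition mu_p :: "real \<Rightarrow> 'a set set \<Rightarrow> real" where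
  "mu_p p H = (\<Sum>A\<in>H. p ^ card A)"

definition Delta_p :: "real \<Rightarrow> 'a set set \<Rightarrow> real" where
  "Delta_p p H = (\<Sum>P\<in>{P. P \<subseteq> H \<and> card P = 2 \<and> \<Inter>P \<noteq> {}}. p ^ card (\<Union>P))"

definition prob_random_subset :: "'a set \<Rightarrow> real \<Rightarrow> ('a set \<Rightarrow> bool) \<Rightarrow> real" where
  "prob_random_subset V p Q =
     (\<Sum>W\<in>{W. W \<subseteq> V \<and> Q W}. p ^ card W * (1 - p) ^ card (V - W))"

end

theory Submission
  imports Defs
begin


definition EE :: "real \<Rightarrow> 'a set \<Rightarrow> ('a set \<Rightarrow> real) \<Rightarrow> real" where
  "EE p V F = (\<Sum>W\<in>Pow V. p ^ card W * (1-p) ^ card (V - W) * F W)"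

lemma EE_empty: "EE p {} F = F {}"
  by (simp add: EE_def)

lemma EE_insert:
  assumes "finite U" "x \<notin> U"
  shows "EE p (insert x U) F = p * EE p U (\<lambda>W. F (insert x W)) + (1-p) * EE p U F"
proof -
  have disj: "Pow U \<inter> insert x ` Pow U = {}" using assms(2) by auto
  have inj: "inj_on (insert x) (Pow U)" using assms(2) unfolding inj_on_def by (metis Diff_insert_absorb PowD subsetD)
  have "EE p (insert x U) F = (\<Sum>W\<in>Pow U. p ^ card W * (1-p) ^ card (insert x U - W) * F W)
      + (\<Sum>W\<in>insert x ` Pow U. p ^ card W * (1-p) ^ card (insert x U - W) * F W)"
    unfolding EE_def Pow_insert using assms(1) disj by (simp add: sum.union_disjoint)
  also have "(\<Sum>W\<in>Pow U. p ^ card W * (1-p) ^ card (insert x U - W) * F W)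
      = (1-p) * EE p U F"
    unfolding EE_def sum_distrib_left
  proof (rule sum.cong)
    fix W assume W: "W \<in> Pow U"
    have "insert x U - W = insert x (U - W)" using W assms by auto
    then have "card (insert x U - W) = Suc (card (U - W))" using assms W by auto
    then show "p ^ card W * (1-p) ^ card (insert x U - W) * F W = (1-p) * (p ^ card W * (1-p) ^ card (U - W) * F W)"
      by simp
  qed simp
  also have "(\<Sum>W\<in>insert x ` Pow U. p ^ card W * (1-p) ^ card (insert x U - W) * F W)
      = p * EE p U (\<lambda>W. F (insert x W))"
    unfolding EE_def sum_distrib_left sum.reindex[OF inj] o_def
  proof (rule sum.cong)
    fix W assume W: "W \<in> Pow U"
    have fW: "finite W" using W assms(1) finite_subset by auto
    have "insert x U - insert x W = U - W" using W assms by auto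
    moreover have "x \<notin> W" using W assms by auto
    then have "card (insert x W) = Suc (card W)" using fW by simp
    ultimately show "p ^ card (insert x W) * (1-p) ^ card (insert x U - insert x W) * F (insert x W) = p * (p ^ card W * (1-p) ^ card (U - W) * F (insert x W))"
      by simp
  qed simp
  finally show ?thesis by simp
qed

lemma EE_cong: "(\<And>W. W \<subseteq> V \<Longrightarrow> F W = G W) \<Longrightarrow> EE p V F = EE p V G"
  unfolding EE_def by (rule sum.cong) auto

lemma EE_const: "finite U \<Longrightarrow> EE p U (\<lambda>_. c) = c"
proof (induction U rule: finite_induct)
  case empty then show ?case by (simp add: EE_empty)
next
  case (insert x U) then show ?case by (simp add: EE_insert algebra_simps)
qed

lemma EE_mono:
  assumes "0 \<le> p" "p \<le> 1" "\<And>W. W \<subseteq> V \<Longrightarrow> F W \<le> G W"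
  shows "EE p V F \<le> EE p V G"
  unfolding EE_def
  by (rule sum_mono) (use assms in \<open>auto intro!: mult_left_mono\<close>)

lemma EE_nonneg:
  assumes "0 \<le> p" "p \<le> 1" "\<And>W. W \<subseteq> V \<Longrightarrow> 0 \<le> F W"
  shows "0 \<le> EE p V F"
  unfolding EE_def
  by (rule sum_nonneg) (use assms in auto)

lemma EE_add: "EE p V (\<lambda>W. F W + G W) = EE p V F + EE p V G"
  unfolding EE_def by (simp add: algebra_simps sum.distrib)

lemma EE_diff: "EE p V (\<lambda>W. F W - G W) = EE p V F - EE p V G"
  unfolding EE_def by (simp add: algebra_simps sum_subtractf)

lemma EE_cmult: "EE p V (\<lambda>W. c * F W) = c * EE p V F"
  unfolding EE_def by (simp add: sum_distrib_left mult_ac)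

lemma EE_sum: "EE p V (\<lambda>W. \<Sum>a\<in>S. F a W) = (\<Sum>a\<in>S. EE p V (F a))"
  unfolding EE_def by (simp add: sum_distrib_left sum.swap[of _ S])

lemma EE_marg:
  assumes "finite U" "x \<notin> U" "\<And>W. W \<subseteq> U \<Longrightarrow> F (insert x W) = F W"
  shows "EE p (insert x U) F = EE p U F"
proof -
  have "EE p U (\<lambda>W. F (insert x W)) = EE p U F" by (rule EE_cong) (use assms in auto)
  moreover have "EE p (insert x U) F = p * EE p U (\<lambda>W. F (insert x W)) + (1-p) * EE p U F"
    by (rule EE_insert[OF assms(1,2)])
  ultimately show ?thesis by (simp add: algebra_simps)
qed

lemma EE_indep:
  assumes "finite A"
  shows "finite V \<Longrightarrow> A \<subseteq> V \<Longrightarrow> (\<And>W. F W = F (W - A)) \<Longrightarrow>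
    EE p V (\<lambda>W. if A \<subseteq> W then F W else 0) = p ^ card A * EE p V F"
  using assms
proof (induction A arbitrary: V F rule: finite_induct)
  case empty then show ?case by simp
next
  case (insert a A)
  define V' where "V' = V - {a}"
  have V: "V = insert a V'" "a \<notin> V'" "finite V'" using insert.prems unfolding V'_def by auto
  have AV': "A \<subseteq> V'" using insert.prems insert.hyps unfolding V'_def by auto
  have FA: "F W = F (W - A)" for W
  proof -
    have e: "W - A - insert a A = W - insert a A" by auto
    show ?thesis using insert.prems(3)[of W] insert.prems(3)[of "W - A"] unfolding e by simp
  qed
  have Fi: "F (insert a W) = F W" for W
    using insert.prems(3)[of "insert a W"] insert.prems(3)[of W] by simp
  have "EE p V (\<lambda>W. if insert a A \<subseteq> W then F W else 0)
     = p * EE p V' (\<lambda>W. if insert a A \<subseteq> insert a W then F (insert a W) else 0)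
       + (1-p) * EE p V' (\<lambda>W. if insert a A \<subseteq> W then F W else 0)"
    using V by (simp add: EE_insert)
  also have "EE p V' (\<lambda>W. if insert a A \<subseteq> W then F W else 0) = EE p V' (\<lambda>_. 0)"
    by (rule EE_cong) (use V in auto)
  also have "\<dots> = 0" using V by (simp add: EE_const)
  also have "EE p V' (\<lambda>W. if insert a A \<subseteq> insert a W then F (insert a W) else 0)
      = EE p V' (\<lambda>W. if A \<subseteq> W then F W else 0)"
    by (rule EE_cong) (use insert.hyps Fi in auto)
  also have "\<dots> = p ^ card A * EE p V' F"
    using insert.IH[of V' F] V(3) AV' FA by blast
  also have "EE p V' F = EE p V F" using V EE_marg[of V' a F p] Fi by simp
  finally show ?case using insert.hyps by simp
qed

lemma EE_harris:
  assumes "finite U" "0 \<le> p" "p \<le> 1"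
  shows "(\<And>W1 W2. W1 \<subseteq> W2 \<Longrightarrow> f W2 \<le> f W1) \<Longrightarrow> (\<And>W1 W2. W1 \<subseteq> W2 \<Longrightarrow> g W2 \<le> g W1)
     \<Longrightarrow> EE p U f * EE p U g \<le> EE p U (\<lambda>W. f W * g W)"
  using assms(1)
proof (induction U arbitrary: f g rule: finite_induct)
  case empty then show ?case by (simp add: EE_empty)
next
  case (insert x U)
  define a1 where "a1 = EE p U (\<lambda>W. f (insert x W))"
  define a0 where "a0 = EE p U f"
  define b1 where "b1 = EE p U (\<lambda>W. g (insert x W))"
  define b0 where "b0 = EE p U g"
  have fi: "f (insert x W2) \<le> f (insert x W1)" if "W1 \<subseteq> W2" for W1 W2
  proof -
    have "insert x W1 \<subseteq> insert x W2" using that by (rule insert_mono)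
    then show ?thesis by (rule insert.prems(1))
  qed
  have gi: "g (insert x W2) \<le> g (insert x W1)" if "W1 \<subseteq> W2" for W1 W2
  proof -
    have "insert x W1 \<subseteq> insert x W2" using that by (rule insert_mono)
    then show ?thesis by (rule insert.prems(2))
  qed
  have h1: "a1 * b1 \<le> EE p U (\<lambda>W. f (insert x W) * g (insert x W))"
    unfolding a1_def b1_def by (rule insert.IH) (rule fi, assumption, rule gi, assumption)
  have h0: "a0 * b0 \<le> EE p U (\<lambda>W. f W * g W)"
    unfolding a0_def b0_def by (rule insert.IH) (use insert.prems in auto)
  have a: "a1 \<le> a0" unfolding a1_def a0_def
    by (rule EE_mono[OF assms(2,3)]) (simp add: insert.prems(1,2) subset_insertI)
  have b: "b1 \<le> b0" unfolding b1_def b0_def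
    by (rule EE_mono[OF assms(2,3)]) (simp add: insert.prems(1,2) subset_insertI)
  have "EE p (insert x U) f * EE p (insert x U) g = (p*a1 + (1-p)*a0) * (p*b1+(1-p)*b0)"
    using insert.hyps by (simp add: EE_insert a1_def a0_def b1_def b0_def)
  also have "\<dots> = p*(a1*b1) + (1-p)*(a0*b0) - p*(1-p)*((a0-a1)*(b0-b1))"
    by (simp add: algebra_simps)
  also have "\<dots> \<le> p*(a1*b1) + (1-p)*(a0*b0)"
    using a b assms by (simp add: mult_nonneg_nonneg)
  also have "\<dots> \<le> p * EE p U (\<lambda>W. f (insert x W) * g (insert x W)) + (1-p) * EE p U (\<lambda>W. f W * g W)"
    using h1 h0 assms by (intro add_mono mult_left_mono) auto
  also have "\<dots> = EE p (insert x U) (\<lambda>W. f W * g W)"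
    using insert.hyps by (simp add: EE_insert)
  finally show ?case .
qed


lemma mn_basic:
  assumes "finite H"
  shows "finite {card M | M. is_matching H M}" "{card M | M. is_matching H M} \<noteq> {}"
proof -
  have "{card M | M. is_matching H M} \<subseteq> card ` Pow H" by (auto simp: is_matching_def)
  then show "finite {card M | M. is_matching H M}" using assms finite_subset by blast
  have "is_matching H {}" by (simp add: is_matching_def)
  then show "{card M | M. is_matching H M} \<noteq> {}" by blast
qed

lemma mn_ge: "finite H \<Longrightarrow> is_matching H M \<Longrightarrow> card M \<le> matching_number H"
  unfolding matching_number_def by (rule Max_ge) (auto simp: mn_basic)

lemma mn_attain: "finite H \<Longrightarrow> \<exists>M. is_matching H M \<and> card M = matching_number H"
  using Max_in[OF mn_basic] unfolding matching_number_def by force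

lemma mn_mono:
  assumes "finite H2" "H1 \<subseteq> H2"
  shows "matching_number H1 \<le> matching_number H2"
proof -
  have "finite H1" using assms finite_subset by blast
  then obtain M where M: "is_matching H1 M" "card M = matching_number H1" using mn_attain by blast
  then have "is_matching H2 M" using assms(2) by (auto simp: is_matching_def)
  then show ?thesis using mn_ge[OF assms(1)] M by force
qed

definition nbr :: "'a set set \<Rightarrow> 'a set \<Rightarrow> 'a set set" where
  "nbr H A = {B\<in>H. B \<noteq> A \<and> B \<inter> A \<noteq> {}}"
definition HA :: "'a set set \<Rightarrow> 'a set \<Rightarrow> 'a set set" where
  "HA H A = {B\<in>H. B \<inter> A = {}}"
definition isoE :: "'a set set \<Rightarrow> 'a set \<Rightarrow> 'a set \<Rightarrow> bool" where
  "isoE H A W \<longleftrightarrow> A \<subseteq> W \<and> (\<forall>B\<in>nbr H A. \<not> B \<subseteq> W)"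

lemma induced_mono: "W1 \<subseteq> W2 \<Longrightarrow> induced H W1 \<subseteq> induced H W2"
  by (auto simp: induced_def)

lemma induced_sub: "induced H W \<subseteq> H"
  by (auto simp: induced_def)

lemma HA_dep: "induced (HA H A) W = induced (HA H A) (W - A)"
  by (auto simp: induced_def HA_def)

lemma iso_count:
  assumes "finite H"
  shows "(\<Sum>A\<in>H. if isoE H A W then 1 else 0) \<le> real (matching_number (induced H W))"
proof -
  have "(\<Sum>A\<in>H. if isoE H A W then 1 else (0::real)) = (\<Sum>A\<in>{A\<in>H. isoE H A W}. 1)"
    using sum.inter_filter[OF assms, of "\<lambda>_. 1::real" "\<lambda>A. isoE H A W"] by simp
  also have "\<dots> = real (card {A\<in>H. isoE H A W})" by simp
  also have "card {A\<in>H. isoE H A W} \<le> matching_number (induced H W)"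
  proof (rule mn_ge)
    show "finite (induced H W)" using assms finite_subset induced_sub by blast
    show "is_matching (induced H W) {A\<in>H. isoE H A W}"
      unfolding is_matching_def
    proof (intro conjI ballI impI)
      show "{A \<in> H. isoE H A W} \<subseteq> induced H W" by (auto simp: induced_def isoE_def)
    next
      fix A B assume A: "A \<in> {A \<in> H. isoE H A W}" and B: "B \<in> {A \<in> H. isoE H A W}" and ne: "A \<noteq> B"
      show "A \<inter> B = {}"
      proof (rule ccontr)
        assume "A \<inter> B \<noteq> {}"
        then have "B \<in> nbr H A" using B ne by (auto simp: nbr_def)
        then show False using A B by (auto simp: isoE_def)
      qed
    qed
  qed
  finally show ?thesis by simp
qed

lemma iso_nu:
  assumes "finite H" "isoE H A W"
  shows "matching_number (induced H W) \<le> 1 + matching_number (induced (HA H A) W)"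
proof -
  have f: "finite (induced H W)" using induced_sub assms(1) by (rule finite_subset)
  have "HA H A \<subseteq> H" by (auto simp: HA_def)
  then have "finite (HA H A)" using assms(1) by (rule finite_subset)
  then have f2: "finite (induced (HA H A) W)" using induced_sub finite_subset by blast
  obtain M where M: "is_matching (induced H W) M" "card M = matching_number (induced H W)"
    using mn_attain[OF f] by blast
  have "is_matching (induced (HA H A) W) (M - {A})"
    unfolding is_matching_def
  proof (intro conjI ballI impI)
    show "M - {A} \<subseteq> induced (HA H A) W"
    proof
      fix B assume B: "B \<in> M - {A}"
      then have BH: "B \<in> H" "B \<subseteq> W" using M(1) by (auto simp: is_matching_def induced_def)
      have "B \<inter> A = {}"
      proof (rule ccontr)
        assume "B \<inter> A \<noteq> {}"
        then have "B \<in> nbr H A" using B BH by (auto simp: nbr_def)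
        then show False using assms(2) BH by (auto simp: isoE_def)
      qed
      then show "B \<in> induced (HA H A) W" using BH by (auto simp: induced_def HA_def)
    qed
  next
    fix B C assume "B \<in> M - {A}" "C \<in> M - {A}" "B \<noteq> C"
    then show "B \<inter> C = {}" using M(1) by (auto simp: is_matching_def)
  qed
  then have "card (M - {A}) \<le> matching_number (induced (HA H A) W)" using mn_ge[OF f2] by blast
  moreover have fM: "finite M" using M(1) f by (auto simp: is_matching_def intro: finite_subset)
  then have "card M \<le> card (M - {A}) + 1"
    by (cases "A \<in> M") (auto simp: card_Diff_singleton_if card_gt_0_iff)
  ultimately show ?thesis using M by simp
qed



definition S2 :: "real \<Rightarrow> 'a set set \<Rightarrow> real" where
  "S2 p H = (\<Sum>A\<in>H. \<Sum>B\<in>nbr H A. p ^ card (A \<union> B))"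

lemma key_edge:
  assumes V: "finite V" and HV: "\<And>A. A \<in> H \<Longrightarrow> A \<subseteq> V" and fH: "finite H"
    and p: "0 \<le> p" "p \<le> 1" and s: "0 \<le> s" and A: "A \<in> H"
  shows "(p ^ card A - (\<Sum>B\<in>nbr H A. p ^ card (A \<union> B))) * exp (-s)
           * EE p V (\<lambda>W. exp (-s * real (matching_number (induced H W))))
         \<le> EE p V (\<lambda>W. (if isoE H A W then 1 else 0) * exp (-s * real (matching_number (induced H W))))"
proof -
  define nu where "nu W = real (matching_number (induced H W))" for W
  define Psi where "Psi = EE p V (\<lambda>W. exp (-s * nu W))"
  define f where "f W = (if \<forall>B\<in>nbr H A. \<not> B \<subseteq> W \<union> A then 1 else (0::real))" for W
  define g where "g W = exp (-s * real (matching_number (induced (HA H A) W)))" for W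
  have AV: "A \<subseteq> V" using HV A by blast
  have fA: "finite A" using AV V finite_subset by blast
  have fHA: "finite (HA H A)" using fH by (rule finite_subset[rotated]) (auto simp: HA_def)
  have fnbr: "finite (nbr H A)" using fH by (rule finite_subset[rotated]) (auto simp: nbr_def)
  have fiH: "finite (induced H W)" for W using induced_sub fH by (rule finite_subset)
  have fiHA: "finite (induced (HA H A) W)" for W using induced_sub fHA by (rule finite_subset)
  have fdep: "f W = f (W - A)" for W
  proof -
    have "W - A \<union> A = W \<union> A" by auto
    then show ?thesis unfolding f_def by simp
  qed
  have gdep: "g W = g (W - A)" for W unfolding g_def using HA_dep[of H A W] by simp
  have s1: "EE p V (\<lambda>W. if A \<subseteq> W then f W * g W else 0) = p ^ card A * EE p V (\<lambda>W. f W * g W)"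
    by (rule EE_indep[OF fA V AV]) (metis fdep gdep)
  have s2: "EE p V (\<lambda>W. exp (-s) * (if A \<subseteq> W then f W * g W else 0))
      \<le> EE p V (\<lambda>W. (if isoE H A W then 1 else 0) * exp (-s * nu W))"
  proof (rule EE_mono[OF p])
    fix W assume "W \<subseteq> V"
    show "exp (-s) * (if A \<subseteq> W then f W * g W else 0) \<le> (if isoE H A W then 1 else 0) * exp (-s * nu W)"
    proof (cases "A \<subseteq> W \<and> (\<forall>B\<in>nbr H A. \<not> B \<subseteq> W \<union> A)")
      case True
      then have WA: "W \<union> A = W" by auto
      then have iso: "isoE H A W" using True by (auto simp: isoE_def)
      have "nu W \<le> 1 + real (matching_number (induced (HA H A) W))"
        using iso_nu[OF fH iso] unfolding nu_def by linarith
      then have "s * nu W \<le> s * (1 + real (matching_number (induced (HA H A) W)))"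
        using s by (rule mult_left_mono)
      then have "-s * nu W \<ge> -s + -s * real (matching_number (induced (HA H A) W))"
        by (simp add: algebra_simps)
      then have "exp (-s + -s * real (matching_number (induced (HA H A) W))) \<le> exp (-s * nu W)"
        by simp
      moreover have "exp (-s) * g W = exp (-s + -s * real (matching_number (induced (HA H A) W)))"
        unfolding g_def by (rule exp_add[symmetric])
      ultimately have "exp (-s) * g W \<le> exp (-s * nu W)" by simp
      then show ?thesis using True iso unfolding f_def by simp
    next
      case False
      then have "(if A \<subseteq> W then f W * g W else 0) = 0" unfolding f_def by auto
      then show ?thesis by simp
    qed
  qed
  have s3: "EE p V f * EE p V g \<le> EE p V (\<lambda>W. f W * g W)"
  proof (rule EE_harris[OF V p])
    fix W1 W2 :: "'a set" assume "W1 \<subseteq> W2"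
    then show "f W2 \<le> f W1" unfolding f_def by auto
  next
    fix W1 W2 :: "'a set" assume "W1 \<subseteq> W2"
    then have "matching_number (induced (HA H A) W1) \<le> matching_number (induced (HA H A) W2)"
      by (intro mn_mono fiHA induced_mono)
    then show "g W2 \<le> g W1" unfolding g_def using s by (simp add: mult_left_mono)
  qed
  have s4: "Psi \<le> EE p V g" unfolding Psi_def
  proof (rule EE_mono[OF p])
    fix W
    have "induced (HA H A) W \<subseteq> induced H W" by (auto simp: induced_def HA_def)
    then have "matching_number (induced (HA H A) W) \<le> matching_number (induced H W)"
      by (intro mn_mono fiH)
    then show "exp (- s * nu W) \<le> g W" unfolding g_def nu_def using s by (simp add: mult_left_mono)
  qed
  have Psi0: "0 \<le> Psi" unfolding Psi_def by (rule EE_nonneg[OF p]) simp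
  have f0: "0 \<le> EE p V f" by (rule EE_nonneg[OF p]) (simp add: f_def)
  have ind: "EE p V (\<lambda>W. if B - A \<subseteq> W then 1 else 0) = p ^ card (B - A)" if B: "B \<in> nbr H A" for B
  proof -
    have BV: "B - A \<subseteq> V" using B HV by (auto simp: nbr_def)
    have "finite (B - A)" using BV V finite_subset by blast
    then have "EE p V (\<lambda>W. if B - A \<subseteq> W then (\<lambda>_. 1::real) W else 0) = p ^ card (B - A) * EE p V (\<lambda>_. 1)"
      by (rule EE_indep[OF _ V BV]) simp
    then show ?thesis using V by (simp add: EE_const)
  qed
  have s5: "1 - (\<Sum>B\<in>nbr H A. p ^ card (B - A)) \<le> EE p V f"
  proof -
    have "EE p V (\<lambda>W. 1 - (\<Sum>B\<in>nbr H A. if B - A \<subseteq> W then 1 else 0)) \<le> EE p V f"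
    proof (rule EE_mono[OF p])
      fix W
      show "1 - (\<Sum>B\<in>nbr H A. if B - A \<subseteq> W then 1 else 0) \<le> f W"
      proof (cases "\<forall>B\<in>nbr H A. \<not> B \<subseteq> W \<union> A")
        case True
        have "0 \<le> (\<Sum>B\<in>nbr H A. if B - A \<subseteq> W then 1 else (0::real))" by (rule sum_nonneg) simp
        then show ?thesis using True unfolding f_def by simp
      next
        case False
        then obtain B where B: "B \<in> nbr H A" "B - A \<subseteq> W" by auto
        have "1 \<le> (\<Sum>B\<in>nbr H A. if B - A \<subseteq> W then 1 else (0::real))"
        proof -
          have "(\<Sum>B\<in>{B}. if B - A \<subseteq> W then 1 else (0::real)) \<le> (\<Sum>B\<in>nbr H A. if B - A \<subseteq> W then 1 else 0)"
            by (rule sum_mono2[OF fnbr]) (use B in auto)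
          then show ?thesis using B by simp
        qed
        then show ?thesis using False unfolding f_def by simp
      qed
    qed
    moreover have "EE p V (\<lambda>W. 1 - (\<Sum>B\<in>nbr H A. if B - A \<subseteq> W then 1 else 0))
        = 1 - (\<Sum>B\<in>nbr H A. p ^ card (B - A))"
      using V by (simp add: EE_diff EE_const EE_sum ind)
    ultimately show ?thesis by simp
  qed
  have cardU: "p ^ card (A \<union> B) = p ^ card A * p ^ card (B - A)" if "B \<in> nbr H A" for B
  proof -
    have "B \<subseteq> V" using that HV by (auto simp: nbr_def)
    then have "finite B" using V by (rule finite_subset)
    then have "card (A \<union> B) = card A + card (B - A)"
      using fA by (metis Un_Diff_cancel card_Un_disjoint Diff_disjoint finite_Diff)
    then show ?thesis by (simp add: power_add)
  qed
  have "(p ^ card A - (\<Sum>B\<in>nbr H A. p ^ card (A \<union> B)))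
      = p ^ card A * (1 - (\<Sum>B\<in>nbr H A. p ^ card (B - A)))"
    by (simp add: cardU right_diff_distrib sum_distrib_left)
  then have "(p ^ card A - (\<Sum>B\<in>nbr H A. p ^ card (A \<union> B))) * exp (-s) * Psi
      = exp (-s) * p ^ card A * ((1 - (\<Sum>B\<in>nbr H A. p ^ card (B - A))) * Psi)" by simp
  also have "\<dots> \<le> exp (-s) * p ^ card A * (EE p V f * Psi)"
    using s5 Psi0 p by (intro mult_left_mono mult_right_mono) auto
  also have "\<dots> \<le> exp (-s) * p ^ card A * (EE p V f * EE p V g)"
    using s4 f0 p by (intro mult_left_mono) auto
  also have "\<dots> \<le> exp (-s) * p ^ card A * EE p V (\<lambda>W. f W * g W)"
    using s3 p by (intro mult_left_mono) auto
  also have "\<dots> = EE p V (\<lambda>W. exp (-s) * (if A \<subseteq> W then f W * g W else 0))"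
    by (simp add: EE_cmult s1)
  also have "\<dots> \<le> EE p V (\<lambda>W. (if isoE H A W then 1 else 0) * exp (-s * nu W))" by (rule s2)
  finally show ?thesis unfolding Psi_def nu_def .
qed



lemma key_sum:
  assumes V: "finite V" and HV: "\<And>A. A \<in> H \<Longrightarrow> A \<subseteq> V" and fH: "finite H"
    and p: "0 \<le> p" "p \<le> 1" and s: "0 \<le> s"
  shows "(mu_p p H - S2 p H) * exp (-s) * EE p V (\<lambda>W. exp (-s * real (matching_number (induced H W))))
      \<le> EE p V (\<lambda>W. real (matching_number (induced H W)) * exp (-s * real (matching_number (induced H W))))"
proof -
  define nu where "nu W = real (matching_number (induced H W))" for W
  have "(mu_p p H - S2 p H) = (\<Sum>A\<in>H. p ^ card A - (\<Sum>B\<in>nbr H A. p ^ card (A \<union> B)))"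
    unfolding mu_p_def S2_def by (simp add: sum_subtractf)
  then have "(mu_p p H - S2 p H) * exp (-s) * EE p V (\<lambda>W. exp (-s * nu W))
     = (\<Sum>A\<in>H. (p ^ card A - (\<Sum>B\<in>nbr H A. p ^ card (A \<union> B))) * exp (-s) * EE p V (\<lambda>W. exp (-s * nu W)))"
    by (simp add: sum_distrib_right)
  also have "\<dots> \<le> (\<Sum>A\<in>H. EE p V (\<lambda>W. (if isoE H A W then 1 else 0) * exp (-s * nu W)))"
    by (rule sum_mono) (unfold nu_def, rule key_edge[OF V HV fH p s], auto)
  also have "\<dots> = EE p V (\<lambda>W. \<Sum>A\<in>H. (if isoE H A W then 1 else 0) * exp (-s * nu W))"
    by (simp add: EE_sum)
  also have "\<dots> \<le> EE p V (\<lambda>W. nu W * exp (-s * nu W))"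
  proof (rule EE_mono[OF p])
    fix W
    have "(\<Sum>A\<in>H. (if isoE H A W then 1 else 0) * exp (-s * nu W))
        = (\<Sum>A\<in>H. if isoE H A W then 1 else 0) * exp (-s * nu W)" by (simp add: sum_distrib_right)
    also have "\<dots> \<le> nu W * exp (-s * nu W)"
      using iso_count[OF fH, of W] unfolding nu_def by (intro mult_right_mono) auto
    finally show "(\<Sum>A\<in>H. (if isoE H A W then 1 else 0) * exp (-s * nu W)) \<le> nu W * exp (-s * nu W)" .
  qed
  finally show ?thesis unfolding nu_def .
qed

lemma ode:
  assumes V: "finite V" and HV: "\<And>A. A \<in> H \<Longrightarrow> A \<subseteq> V" and fH: "finite H"
    and p: "0 \<le> p" "p \<le> 1" and t: "0 \<le> t"
  shows "EE p V (\<lambda>W. exp (-t * real (matching_number (induced H W))))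
      \<le> exp (- (mu_p p H - S2 p H) * (1 - exp (-t)))"
proof -
  define nu where "nu W = real (matching_number (induced H W))" for W
  define c where "c = mu_p p H - S2 p H"
  define Psi where "Psi s = EE p V (\<lambda>W. exp (-s * nu W))" for s
  define D where "D s = - EE p V (\<lambda>W. nu W * exp (-s * nu W))" for s
  define h where "h s = Psi s * exp (c * (1 - exp (-s)))" for s
  have dPsi: "(Psi has_real_derivative D s) (at s)" for s
  proof -
    have e: "D s = (\<Sum>W\<in>Pow V. p ^ card W * (1-p) ^ card (V - W) * (exp (-s * nu W) * (- nu W)))"
      unfolding D_def EE_def by (simp add: sum_negf[symmetric] mult_ac)
    show ?thesis unfolding e Psi_def EE_def
      by (rule DERIV_sum, rule DERIV_cmult, auto intro!: derivative_eq_intros)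
  qed
  have dh: "(h has_real_derivative (D s * exp (c * (1 - exp (-s))) + Psi s * (exp (c * (1 - exp (-s))) * (c * exp (-s))))) (at s)" for s
    unfolding h_def
    by (rule derivative_eq_intros dPsi refl | simp)+
  have "h t \<le> h 0"
  proof (rule DERIV_nonpos_imp_nonincreasing[OF t])
    fix s assume s: "0 \<le> s" "s \<le> t"
    have "c * exp (-s) * Psi s \<le> - D s"
      using key_sum[OF V HV fH p s(1)] unfolding c_def D_def Psi_def nu_def by simp
    then have "D s + Psi s * (c * exp (-s)) \<le> 0" by (simp add: mult_ac)
    then have "(D s + Psi s * (c * exp (-s))) * exp (c * (1 - exp (-s))) \<le> 0"
      by (simp add: mult_nonpos_nonneg)
    then show "\<exists>y. (h has_real_derivative y) (at s) \<and> y \<le> 0"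
      using dh[of s] by (intro exI[of _ "(D s * exp (c * (1 - exp (-s))) + Psi s * (exp (c * (1 - exp (-s))) * (c * exp (-s))))"]) (auto simp: algebra_simps)
  qed
  also have "h 0 = 1" unfolding h_def Psi_def using V by (simp add: EE_const)
  finally have "Psi t * exp (c * (1 - exp (-t))) \<le> 1" unfolding h_def .
  then have "(Psi t * exp (c * (1 - exp (-t)))) * exp (-(c * (1 - exp (-t)))) \<le> 1 * exp (-(c * (1 - exp (-t))))"
    by (rule mult_right_mono) simp
  then have fin: "Psi t \<le> exp (-(c * (1 - exp (-t))))" by (simp only: mult.assoc exp_minus_inverse mult_1_right mult_1_left)
  show ?thesis using fin unfolding Psi_def nu_def c_def mult_minus_left .
qed

lemma S2_Delta:
  assumes fH: "finite H"
  shows "S2 p H = 2 * Delta_p p H"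
proof -
  define S where "S = Sigma H (nbr H)"
  define T where "T = {P. P \<subseteq> H \<and> card P = 2 \<and> \<Inter>P \<noteq> {}}"
  define phi where "phi x = {fst x, snd x}" for x :: "'a set \<times> 'a set"
  define h where "h x = p ^ card (fst x \<union> snd x)" for x :: "'a set \<times> 'a set"
  have fnbr: "finite (nbr H A)" for A using fH by (rule finite_subset[rotated]) (auto simp: nbr_def)
  have fS: "finite S" unfolding S_def by (rule finite_SigmaI[OF fH fnbr])
  have "T \<subseteq> Pow H" unfolding T_def by auto
  then have fT: "finite T" by (rule finite_subset) (simp add: fH)
  have ST: "phi ` S \<subseteq> T"
  proof
    fix P assume "P \<in> phi ` S"
    then obtain A B where AB: "A \<in> H" "B \<in> nbr H A" "P = {A, B}" unfolding S_def phi_def by auto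
    then have "B \<in> H" "B \<noteq> A" "B \<inter> A \<noteq> {}" unfolding nbr_def by auto
    then have "{A, B} \<subseteq> H" "card {A, B} = 2" "\<Inter>{A, B} \<noteq> {}" using AB(1) by auto
    then show "P \<in> T" unfolding T_def AB(3) by blast
  qed
  have "S2 p H = sum h S" unfolding S2_def S_def h_def
    using sum.Sigma[OF fH, of "nbr H" "\<lambda>A B. p ^ card (A \<union> B)"] fnbr by (simp add: case_prod_beta)
  also have "\<dots> = (\<Sum>P\<in>T. sum h {x. x \<in> S \<and> phi x = P})"
    by (rule sum.group[OF fS fT ST, symmetric])
  also have "\<dots> = (\<Sum>P\<in>T. 2 * p ^ card (\<Union>P))"
  proof (rule sum.cong[OF refl])
    fix P assume "P \<in> T"
    then have PT: "P \<subseteq> H" "card P = 2" "\<Inter>P \<noteq> {}" unfolding T_def by auto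
    have "\<exists>x y. P = {x,y} \<and> x \<noteq> y" using PT(2) by (simp only: card_2_iff)
    then obtain A B where AB0: "P = {A, B}" "A \<noteq> B" by blast
    have AB: "P = {A, B}" "A \<noteq> B" "A \<in> H" "B \<in> H" "A \<inter> B \<noteq> {}"
      using AB0 PT by auto
    have "{x. x \<in> S \<and> phi x = P} = {(A, B), (B, A)}"
      using AB unfolding S_def phi_def nbr_def by (auto simp: doubleton_eq_iff)
    moreover have "(A, B) \<noteq> (B, A)" using AB by auto
    ultimately show "sum h {x. x \<in> S \<and> phi x = P} = 2 * p ^ card (\<Union>P)"
      using AB unfolding h_def by (simp add: Un_commute)
  qed
  also have "\<dots> = 2 * Delta_p p H" unfolding Delta_p_def T_def by (simp add: sum_distrib_left)
  finally show ?thesis .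
qed



lemma ln_bound:
  fixes g :: real assumes "0 < g" "g \<le> 1/10"
  shows "2 * g * (- ln g) \<le> 1 - g"
proof -
  have e1: "exp (1/2::real) \<ge> 1 + 1/2" by (rule exp_ge_add_one_self)
  have "exp (1::real) = exp (1/2) * exp (1/2)" by (simp flip: exp_add)
  also have "\<dots> \<ge> (3/2) * (3/2)" using e1 by (intro mult_mono) auto
  finally have e: "exp 1 \<ge> (9/4::real)" by simp
  have x: "0 < 1/g" using assms by simp
  have "ln ((1/g) / exp 1) \<le> (1/g) / exp 1 - 1" by (rule ln_le_minus_one) (use x in simp)
  moreover have "ln ((1/g) / exp 1) = - ln g - 1"
  proof -
    have "ln ((1/g) / exp 1) = ln (1/g) - ln (exp 1)" using x by (intro ln_divide_pos) auto
    moreover have "ln (1/g) = ln 1 - ln g" using assms by (intro ln_divide_pos) auto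
    ultimately show ?thesis by simp
  qed
  ultimately have "- ln g \<le> (1/g) / exp 1" by simp
  then have "g * (- ln g) \<le> g * ((1/g) / exp 1)" using assms by (intro mult_left_mono) auto
  also have "\<dots> = 1 / exp 1" using assms by simp
  also have "\<dots> \<le> 4/9" using e by (simp add: field_simps)
  finally show ?thesis using assms by linarith
qed

theorem mainTheorem3:
  fixes V :: "'a set" and H :: "'a set set" and p \<gamma> :: real
  assumes "hypergraph_on V H"
    and "0 \<le> p" and "p \<le> 1"
    and "0 < \<gamma>" and "\<gamma> \<le> 1/10"
  shows "prob_random_subset V p
           (\<lambda>W. real (matching_number (induced H W)) \<le> \<gamma>^2 * mu_p p H)
         \<le> exp (- (1 - \<gamma>) * mu_p p H + 2 * Delta_p p H)"
proof -
  have V: "finite V" and HV: "\<And>A. A \<in> H \<Longrightarrow> A \<subseteq> V" using assms(1) unfolding hypergraph_on_def by auto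
  have "H \<subseteq> Pow V" using HV by auto
  then have fH: "finite H" by (rule finite_subset) (simp add: V)
  have p: "0 \<le> p" "p \<le> 1" by fact+
  define nu where "nu W = real (matching_number (induced H W))" for W
  define mu where "mu = mu_p p H"
  define De where "De = Delta_p p H"
  define L where "L = - ln \<gamma>"
  define t where "t = 2 * L"
  define k where "k = \<gamma>^2 * mu"
  have L0: "0 \<le> L" unfolding L_def using assms by simp
  have t0: "0 \<le> t" unfolding t_def using L0 by simp
  have et: "exp (-t) = \<gamma>^2"
  proof -
    have "exp (-t) = exp (ln \<gamma> + ln \<gamma>)" unfolding t_def L_def by simp
    also have "\<dots> = exp (ln \<gamma>) * exp (ln \<gamma>)" by (rule exp_add)
    also have "\<dots> = \<gamma> * \<gamma>" using assms by simp
    finally show ?thesis by (simp add: power2_eq_square)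
  qed
  have mu0: "0 \<le> mu" unfolding mu_def mu_p_def using p by (intro sum_nonneg) auto
  have De0: "0 \<le> De" unfolding De_def Delta_p_def using p by (intro sum_nonneg) auto
  have S2eq: "S2 p H = 2 * De" unfolding De_def by (rule S2_Delta[OF fH])
  have "prob_random_subset V p (\<lambda>W. nu W \<le> k)
      = (\<Sum>W\<in>Pow V. if nu W \<le> k then p ^ card W * (1 - p) ^ card (V - W) else 0)"
  proof -
    have "{W. W \<subseteq> V \<and> nu W \<le> k} = {W \<in> Pow V. nu W \<le> k}" by auto
    then show ?thesis unfolding prob_random_subset_def using V
      by (simp add: sum.inter_filter[symmetric])
  qed
  also have "\<dots> \<le> EE p V (\<lambda>W. exp (t * (k - nu W)))"
    unfolding EE_def
  proof (rule sum_mono)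
    fix W assume "W \<in> Pow V"
    have w0: "0 \<le> p ^ card W * (1 - p) ^ card (V - W)" using p by simp
    show "(if nu W \<le> k then p ^ card W * (1 - p) ^ card (V - W) else 0)
        \<le> p ^ card W * (1 - p) ^ card (V - W) * exp (t * (k - nu W))"
    proof (cases "nu W \<le> k")
      case True
      then have "1 \<le> exp (t * (k - nu W))" using t0 by simp
      then show ?thesis using True w0 by (simp add: mult_le_cancel_left1)
    next
      case False then show ?thesis using w0 by simp
    qed
  qed
  also have "\<dots> = exp (t * k) * EE p V (\<lambda>W. exp (-t * nu W))"
  proof -
    have "EE p V (\<lambda>W. exp (t * (k - nu W))) = EE p V (\<lambda>W. exp (t * k) * exp (-t * nu W))"
      by (rule EE_cong) (simp add: algebra_simps flip: exp_add)
    then show ?thesis by (simp add: EE_cmult)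
  qed
  also have "\<dots> \<le> exp (t * k) * exp (- (mu - S2 p H) * (1 - exp (-t)))"
    using ode[OF V HV fH p t0] unfolding nu_def mu_def by (intro mult_left_mono) auto
  also have "\<dots> = exp (t * k - (mu - 2 * De) * (1 - \<gamma>^2))"
    unfolding S2eq et exp_add[symmetric] by (simp add: algebra_simps)
  also have "\<dots> \<le> exp (- (1 - \<gamma>) * mu + 2 * De)"
  proof -
    have h1: "2 * \<gamma> * L \<le> 1 - \<gamma>" unfolding L_def using ln_bound assms(4,5) by simp
    have "\<gamma> * mu * (2 * \<gamma> * L) \<le> \<gamma> * mu * (1 - \<gamma>)"
      using h1 mu0 assms(4) by (intro mult_left_mono) auto
    moreover have "2 * De * \<gamma>^2 \<ge> 0" using De0 by simp
    moreover have "t * k = \<gamma> * mu * (2 * \<gamma> * L)" unfolding t_def k_def by (simp add: power2_eq_square)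
    ultimately have "t * k - (mu - 2 * De) * (1 - \<gamma>^2) \<le> - (1 - \<gamma>) * mu + 2 * De"
      by (simp add: algebra_simps power2_eq_square)
    then show ?thesis by simp
  qed
  finally show ?thesis unfolding nu_def k_def mu_def De_def .
qed

end
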